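(* For every integer $n\ge3$, the coefficient of the monomial $T_2T_n^2$ in $R_{n+1}$ is $c^{(n+1)}_{n,n,2}=-n(n+1)$.
   Context: Let $T_1,T_2,\dots$ be indeterminates, $T_\alpha=T_{\alpha_1}\cdots T_{\alpha_d}$. Define linear operators $L,H$ on monomials (constants sent to $0$): $L(T_{\alpha_1}\cdots T_{\alpha_r})=\sum_{1\le i<j\le r}T_{\alpha_1}\cdots T_{\alpha_i+1}\cdots T_{\alpha_j+1}\cdots T_{\alpha_r}$, $H(T_{\alpha_1}\cdots T_{\alpha_r})=-\frac12\sum_{k=1}^{r}\sum_{l=1}^{\alpha_k-1}\binom{\alpha_k}{l}T_{1+l}T_{1+\alpha_k-l}\prod_{i\ne k}T_{\alpha_i}$. For $n\ge2$ let $A_n=-\sum_{k=1}^{n-1}\binom{n}{k}T_{1+k}T_{1+n-k}T_n$; set $R_2=0$, $R_{n+1}=A_n+L(R_n)+H(R_n)$. $c^{(n)}_\alpha$ is the coefficient of the monomial $T_\alpha$ in $R_n$. *)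

theory Defs
  imports Complex_Main "HOL-Library.Multiset"
begin

text \<open>A polynomial in the indeterminates T_1, T_2, ... with rational coefficients is
represented as a formal sum: a list of (coefficient, monomial) pairs, where a monomial
T_{a_1}...T_{a_r} is the list [a_1,...,a_r] (order irrelevant).\<close>

type_synonym fpoly = "(rat \<times> nat list) list"

definition pcoeff :: "fpoly \<Rightarrow> nat list \<Rightarrow> rat" where
  "pcoeff P \<alpha> = sum_list (map fst (filter (\<lambda>(c, m). mset m = mset \<alpha>) P))"

definition lin :: "(nat list \<Rightarrow> fpoly) \<Rightarrow> fpoly \<Rightarrow> fpoly" where
  "lin f P = concat (map (\<lambda>(c, m). map (\<lambda>(d, m'). (c * d, m')) (f m)) P)"

definition L_mon :: "nat list \<Rightarrow> fpoly" where
  "L_mon as = [(1, as[i := as ! i + 1, j := as ! j + 1]).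
                 i \<leftarrow> [0..<length as], j \<leftarrow> [Suc i..<length as]]"

definition H_mon :: "nat list \<Rightarrow> fpoly" where
  "H_mon as = [(- (1/2) * of_nat ((as ! k) choose l),
                 (take k as @ drop (Suc k) as) @ [1 + l, 1 + (as ! k) - l]).
                 k \<leftarrow> [0..<length as], l \<leftarrow> [1..<as ! k]]"

definition A_poly :: "nat \<Rightarrow> fpoly" where
  "A_poly n = [(- of_nat (n choose k), [1 + k, 1 + n - k, n]). k \<leftarrow> [1..<n]]"

text \<open>R_2 = 0, R_{n+1} = A_n + L(R_n) + H(R_n) for n >= 2 (R_0, R_1 are unused and set to 0).\<close>
primrec R :: "nat \<Rightarrow> fpoly" where
  "R 0 = []"
| "R (Suc n) = (if n < 2 then [] else A_poly n @ lin L_mon (R n) @ lin H_mon (R n))"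

end

theory Submission imports Defs begin
lemma m3: "mset [x,y,z::nat] = mset [p,q,r] \<longleftrightarrow> (x=p\<and>y=q\<and>z=r)\<or>(x=p\<and>y=r\<and>z=q)\<or>(x=q\<and>y=p\<and>z=r)\<or>(x=q\<and>y=r\<and>z=p)\<or>(x=r\<and>y=p\<and>z=q)\<or>(x=r\<and>y=q\<and>z=p)"
  by (auto simp: add_eq_conv_ex)
lemma R4_base: "pcoeff (R 4) [3,3,2] = -12"
  by (simp add: pcoeff_def lin_def L_mon_def H_mon_def A_poly_def numeral_eq_Suc upt_rec) (auto simp: add_eq_conv_ex)

lemma pcoeff_append[simp]: "pcoeff (P @ Q) a = pcoeff P a + pcoeff Q a"
  by (simp add: pcoeff_def)
lemma pcoeff_Nil[simp]: "pcoeff [] a = 0" by (simp add: pcoeff_def)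
lemma pcoeff_Cons[simp]: "pcoeff ((c,m)#P) a = (if mset m = mset a then c else 0) + pcoeff P a"
  by (simp add: pcoeff_def)
lemma pcoeff_scale: "pcoeff (map (\<lambda>(d, m'). (c * d, m')) xs) a = c * pcoeff xs a"
  by (induction xs) (auto simp: algebra_simps)
lemma pcoeff_lin: "pcoeff (lin f P) a = sum_list (map (\<lambda>(c,m). c * pcoeff (f m) a) P)"
  by (induction P) (auto simp: lin_def pcoeff_scale)
lemma pcoeff_len0: "(\<And>c m. (c,m) \<in> set P \<Longrightarrow> length m \<noteq> length a) \<Longrightarrow> pcoeff P a = 0"
proof (induction P)
  case (Cons x P) then show ?case by (cases x) (auto dest: mset_eq_length)
qed simp

lemma set_lin: "(c',m') \<in> set (lin f P) \<Longrightarrow> \<exists>c m d. (c,m) \<in> set P \<and> (d,m') \<in> set (f m)"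
  by (auto simp: lin_def)

definition good :: "nat list \<Rightarrow> bool" where
  "good m \<longleftrightarrow> length m \<ge> 3 \<and> (\<forall>x\<in>set m. x \<ge> 2)"

lemma L_mon_len: "(d,m') \<in> set (L_mon m) \<Longrightarrow> length m' = length m"
  by (auto simp: L_mon_def)
lemma upd_ge: "\<forall>x\<in>set as. (x::nat) \<ge> 2 \<Longrightarrow> v \<ge> 2 \<Longrightarrow> \<forall>x\<in>set (as[i:=v]). x \<ge> 2"
  using set_update_subset_insert[of as i v] by auto
lemma L_mon_good: "(d,m') \<in> set (L_mon m) \<Longrightarrow> good m \<Longrightarrow> good m'"
  unfolding good_def L_mon_def
proof clarsimp
  fix i j x assume a: "\<forall>x\<in>set m. 2 \<le> x" and x: "x \<in> set (m[i := Suc (m ! i), j := Suc (m ! j)])" and ij: "Suc i \<le> j" "j < length m"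
  have "m ! i \<in> set m" using ij by auto
  then have "\<forall>x\<in>set (m[i := Suc (m ! i)]). 2 \<le> x" using a by (intro upd_ge) auto
  moreover have "m ! j \<in> set m" using ij by auto
  then have "2 \<le> Suc (m ! j)" using a by auto
  ultimately show "2 \<le> x" using upd_ge x by blast
qed
lemma H_mon_good: "(d,m') \<in> set (H_mon m) \<Longrightarrow> good m \<Longrightarrow> good m' \<and> length m' = length m + 1"
  unfolding good_def H_mon_def
  apply clarsimp
  apply (auto dest: in_set_takeD in_set_dropD)
  done
lemma R_good: "(c,m) \<in> set (R n) \<Longrightarrow> good m"
proof (induction n arbitrary: c m)
  case (Suc n)
  show ?case
  proof (cases "n < 2")
    case True then show ?thesis using Suc by simp
  next
    case False
    then have "(c,m) \<in> set (A_poly n) \<or> (c,m) \<in> set (lin L_mon (R n)) \<or> (c,m) \<in> set (lin H_mon (R n))"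
      using Suc.prems by auto
    then show ?thesis
    proof (elim disjE)
      assume "(c,m) \<in> set (A_poly n)"
      then show ?thesis using False by (auto simp: A_poly_def good_def)
    next
      assume "(c,m) \<in> set (lin L_mon (R n))"
      then show ?thesis using Suc.IH by (blast dest: set_lin L_mon_good)
    next
      assume "(c,m) \<in> set (lin H_mon (R n))"
      then show ?thesis using Suc.IH by (blast dest: set_lin H_mon_good)
    qed
  qed
qed simp

lemma H_zero: "pcoeff (lin H_mon (R n)) [a,b,c] = 0"
  apply (rule pcoeff_len0)
  apply (drule set_lin)
  apply (auto dest!: R_good H_mon_good simp: good_def)
  done

lemma pcoeff_map: "pcoeff (map (\<lambda>k. (f k, g k)) xs) a = sum_list (map (\<lambda>k. if mset (g k) = mset a then f k else 0) xs)"
  by (induction xs) auto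

lemma A_cond: assumes "n \<ge> 3" "1 \<le> k" "k < n"
  shows "mset [1+k, 1+n-k, n] = mset [n,n,2::nat] \<longleftrightarrow> k = 1 \<or> k = n - 1"
  unfolding m3 using assms by auto

lemma A_val: assumes "n \<ge> 3" shows "pcoeff (A_poly n) [n,n,2] = - 2 * of_nat n"
proof -
  have "pcoeff (A_poly n) [n,n,2] = sum_list (map (\<lambda>k. if mset [1+k, 1+n-k, n] = mset [n,n,2] then - of_nat (n choose k) else 0) [1..<n])"
    unfolding A_poly_def by (simp only: pcoeff_map)
  also have "\<dots> = (\<Sum>k\<in>{1..<n}. if k = 1 \<or> k = n - 1 then - of_nat (n choose k) else 0)"
    apply (simp only: sum_list_distinct_conv_sum_set[OF distinct_upt] set_upt)
    apply (rule sum.cong[OF refl])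
    subgoal for k by (subst A_cond[OF assms]) auto
    done
  also have "\<dots> = (\<Sum>k\<in>{1, n-1}. - of_nat (n choose k))"
    using assms by (intro sum.mono_neutral_cong_right) auto
  also have "\<dots> = - 2 * of_nat n"
    using assms by (simp add: binomial_symmetric)
  finally show ?thesis .
qed

lemma L_mon3: "L_mon [a,b,c] = [(1,[a+1,b+1,c]),(1,[a+1,b,c+1]),(1,[a,b+1,c+1])]"
  by (simp add: L_mon_def upt_rec)

lemma L_single: assumes "n \<ge> 4" "good m"
  shows "pcoeff (L_mon m) [n,n,2] = (if mset m = mset [n-1,n-1,2] then 1 else 0)"
proof (cases "length m = 3")
  case False
  then have "mset m \<noteq> mset [n-1,n-1,2]" by (metis length_Cons list.size(3) mset_eq_length numeral_3_eq_3)
  moreover have "pcoeff (L_mon m) [n,n,2] = 0"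
    by (rule pcoeff_len0) (use False in \<open>auto dest: L_mon_len\<close>)
  ultimately show ?thesis by simp
next
  case True
  then obtain a b c where m: "m = [a,b,c]"
    by (metis (no_types) length_0_conv length_Suc_conv numeral_3_eq_3)
  have abc: "a \<ge> 2" "b \<ge> 2" "c \<ge> 2" using assms(2) by (auto simp: good_def m)
  show ?thesis unfolding m L_mon3
    apply (simp only: pcoeff_Cons pcoeff_Nil m3)
    using abc assms(1) by auto
qed

lemma pcoeff_alt: "pcoeff P a = sum_list (map (\<lambda>(c,m). c * (if mset m = mset a then 1 else 0)) P)"
  by (induction P) auto

lemma L_step: assumes "n \<ge> 4"
  shows "pcoeff (lin L_mon (R k)) [n,n,2] = pcoeff (R k) [n-1,n-1,2]"
  unfolding pcoeff_lin pcoeff_alt[of "R k"]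
  apply (rule arg_cong[where f=sum_list])
  apply (rule map_cong[OF refl])
  using L_single[OF assms] R_good by auto

theorem mainTheorem13:
  fixes n :: nat
  assumes "n \<ge> 3"
  shows "pcoeff (R (n + 1)) [n, n, 2] = - of_nat (n * (n + 1))"
  using assms
proof (induction n rule: nat_induct_at_least)
  case base
  show ?case using R4_base by simp
next
  case (Suc n)
  have "R (Suc n + 1) = A_poly (Suc n) @ lin L_mon (R (Suc n)) @ lin H_mon (R (Suc n))"
    using Suc.hyps by simp
  then have "pcoeff (R (Suc n + 1)) [Suc n, Suc n, 2] = - 2 * of_nat (Suc n) + pcoeff (R (n+1)) [n,n,2]"
  proof -
    have "pcoeff (R (Suc n + 1)) [Suc n, Suc n, 2] = pcoeff (A_poly (Suc n)) [Suc n, Suc n, 2]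
       + pcoeff (lin L_mon (R (Suc n))) [Suc n, Suc n, 2] + pcoeff (lin H_mon (R (Suc n))) [Suc n, Suc n, 2]"
      unfolding \<open>R (Suc n + 1) = _\<close> by simp
    also have "\<dots> = - 2 * of_nat (Suc n) + pcoeff (R (n+1)) [n,n,2]"
      using Suc.hyps A_val[of "Suc n"] H_zero[of "Suc n" "Suc n" "Suc n" 2] L_step[of "Suc n" "Suc n"] by simp
    finally show ?thesis .
  qed
  also have "\<dots> = - of_nat (Suc n * (Suc n + 1))"
    using Suc.IH by (simp add: algebra_simps)
  finally show ?case .
qed
end
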